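(* Let $q\ge2$, $n\ge2$, $X=\{0,\ldots,q-1\}$, and let $\mathcal{L}=\{L_1,\ldots,L_k\}$ be a partition of $X^n$ with respect to which the Insect Markov chain on $X^n$ is lumpable. For each $i$ let $L_i'\subseteq X^{n-1}$ be the set of words obtained by deleting the last letter from the elements of $L_i$, and let $\mathcal{L}'=\{L_1',\ldots,L_h'\}$ be the collection of distinct sets among $L_1',\dots,L_k'$ (which is a partition of $X^{n-1}$). Then the Insect Markov chain on $X^{n-1}$ is lumpable with respect to $\mathcal{L}'$.
   Context: For $m\ge1$ and $x,y\in X^m$, $d(x,y)=m-\max\{\ell\in\{0,\ldots,m\}: x_1\cdots x_\ell=y_1\cdots y_\ell\}$. The Insect Markov chain on $X^m$: set $\alpha_j=\frac{q^j-1}{q^{j+1}-1}$ for $1\le j\le m-1$, $\alpha_m=0$; transition probabilities are $p(x,y)=q^{-1}(1-\alpha_1)+\sum_{i=2}^mq^{-i}\alpha_1\cdots\alpha_{i-1}(1-\alpha_i)$ if $d(x,y)\in\{0,1\}$, and $p(x,y)=\sum_{i=j}^mq^{-i}\alpha_1\cdots\alpha_{i-1}(1-\alpha_i)$ if $d(x,y)=j>1$. A chain is lumpable with respect to a partition if for all parts $L,L'$ the map $x\mapsto\sum_{y\in L'}p(x,y)$ is constant on $L$. *)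

theory Defs
  imports Complex_Main "HOL-Library.Disjoint_Sets"
begin

definition words :: "nat \<Rightarrow> nat \<Rightarrow> nat list set" where
  "words q m = {w. length w = m \<and> set w \<subseteq> {..<q}}"

definition insect_dist :: "nat \<Rightarrow> nat list \<Rightarrow> nat list \<Rightarrow> nat" where
  "insect_dist m x y = m - Max {l. l \<le> m \<and> take l x = take l y}"

definition insect_alpha :: "nat \<Rightarrow> nat \<Rightarrow> nat \<Rightarrow> real" where
  "insect_alpha q m j = (if j = m then 0 else (real q ^ j - 1) / (real q ^ (j + 1) - 1))"

definition insect_term :: "nat \<Rightarrow> nat \<Rightarrow> nat \<Rightarrow> real" where
  "insect_term q m i = (1 / real q ^ i) * (\<Prod>l\<in>{1..<i}. insect_alpha q m l) * (1 - insect_alpha q m i)"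

definition insect_p :: "nat \<Rightarrow> nat \<Rightarrow> nat list \<Rightarrow> nat list \<Rightarrow> real" where
  "insect_p q m x y =
     (if insect_dist m x y \<in> {0, 1}
      then (1 / real q) * (1 - insect_alpha q m 1) + (\<Sum>i\<in>{2..m}. insect_term q m i)
      else (\<Sum>i\<in>{insect_dist m x y..m}. insect_term q m i))"

definition insect_lumpable :: "nat \<Rightarrow> nat \<Rightarrow> nat list set set \<Rightarrow> bool" where
  "insect_lumpable q m P \<longleftrightarrow> partition_on (words q m) P \<and>
     (\<forall>L\<in>P. \<forall>L'\<in>P. \<forall>x\<in>L. \<forall>x'\<in>L.
        (\<Sum>y\<in>L'. insect_p q m x y) = (\<Sum>y\<in>L'. insect_p q m x' y))"

end

theory Submission
  imports Defs
begin


lemma words_eq: "words q m = {xs. set xs \<subseteq> {..<q} \<and> length xs = m}"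
  by (auto simp: words_def)

lemma words_finite[simp]: "finite (words q m)"
  unfolding words_eq by (rule finite_lists_length_eq) simp

lemma card_words: "card (words q m) = q ^ m"
  unfolding words_eq by (simp add: card_lists_length_eq)

lemma count_take:
  assumes "x \<in> words q n" "j \<le> n"
  shows "card {y\<in>words q n. take j y = take j x} = q^(n-j)"
proof -
  have "bij_betw (\<lambda>w. take j x @ w) (words q (n-j)) {y\<in>words q n. take j y = take j x}"
  proof (rule bij_betw_imageI)
    show "inj_on (\<lambda>w. take j x @ w) (words q (n - j))" by (auto simp: inj_on_def)
    show "(\<lambda>w. take j x @ w) ` words q (n - j) = {y \<in> words q n. take j y = take j x}"
    proof
      show "(\<lambda>w. take j x @ w) ` words q (n - j) \<subseteq> {y \<in> words q n. take j y = take j x}"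
        using assms by (auto simp: words_def dest!: in_set_takeD)
    next
      show "{y \<in> words q n. take j y = take j x} \<subseteq> (\<lambda>w. take j x @ w) ` words q (n - j)"
      proof
        fix y assume y: "y \<in> {y \<in> words q n. take j y = take j x}"
        hence "y = take j x @ drop j y" by (metis (mono_tags) append_take_drop_id mem_Collect_eq)
        moreover have "drop j y \<in> words q (n-j)" using y by (auto simp: words_def dest: in_set_dropD)
        ultimately show "y \<in> (\<lambda>w. take j x @ w) ` words q (n - j)" by blast
      qed
    qed
  qed
  from bij_betw_same_card[OF this] show ?thesis by (simp add: card_words)
qed

lemma count_take_sum:
  assumes "x \<in> words q n" "j \<le> n"
  shows "(\<Sum>y\<in>words q n. if take j y = take j x then 1 else 0 :: real) = real q^(n-j)"
proof -
  have "(\<Sum>y\<in>words q n. if take j y = take j x then 1 else 0 :: real) = (\<Sum>y\<in>words q n. of_bool (take j y = take j x))"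
    by (rule sum.cong) auto
  also have "\<dots> = real (card (words q n \<inter> {y. take j y = take j x}))" by simp
  also have "words q n \<inter> {y. take j y = take j x} = {y\<in>words q n. take j y = take j x}" by auto
  finally show ?thesis using count_take[OF assms] by simp
qed

lemma take_le_eq: "take a y = take a x \<Longrightarrow> b \<le> a \<Longrightarrow> take b y = take b x"
  by (metis min.absorb1 take_take)

definition avg :: "nat \<Rightarrow> nat \<Rightarrow> nat \<Rightarrow> (nat list \<Rightarrow> real) \<Rightarrow> nat list \<Rightarrow> real" where
  "avg q n j f x = (if x \<in> words q n then
     (\<Sum>y\<in>words q n. if take j y = take j x then f y else 0) / real q ^ (n - j) else 0)"

lemma avg_avg:
  assumes "a \<le> n" "b \<le> n" "q \<ge> 1"
  shows "avg q n a (avg q n b f) x = avg q n (min a b) f x"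
proof (cases "x \<in> words q n")
  case False thus ?thesis by (simp add: avg_def)
next
  case xW: True
  let ?W = "words q n"
  have qp: "real q ^ k > 0" for k using assms by simp
  show ?thesis
  proof (cases "a \<le> b")
    case True
    have "avg q n a (avg q n b f) x = (\<Sum>y\<in>?W. if take a y = take a x then
        (\<Sum>z\<in>?W. if take b z = take b y then f z else 0) / real q ^ (n - b) else 0) / real q ^ (n - a)"
      using xW by (simp add: avg_def cong: if_cong)
    also have "(\<Sum>y\<in>?W. if take a y = take a x then
        (\<Sum>z\<in>?W. if take b z = take b y then f z else 0) / real q ^ (n - b) else 0)
      = (\<Sum>y\<in>?W. \<Sum>z\<in>?W. (if take a y = take a x \<and> take b z = take b y then f z else 0) / real q ^ (n - b))"
      by (rule sum.cong) (auto simp: sum_divide_distrib intro!: sum.cong)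
    also have "\<dots> = (\<Sum>z\<in>?W. \<Sum>y\<in>?W. (if take a y = take a x \<and> take b z = take b y then f z else 0) / real q ^ (n - b))"
      by (rule sum.swap)
    also have "\<dots> = (\<Sum>z\<in>?W. if take a z = take a x then f z else 0)"
    proof (rule sum.cong)
      fix z assume zW: "z \<in> ?W"
      show "(\<Sum>y\<in>?W. (if take a y = take a x \<and> take b z = take b y then f z else 0) / real q ^ (n - b))
         = (if take a z = take a x then f z else 0)"
      proof (cases "take a z = take a x")
        case True
        have "(\<Sum>y\<in>?W. (if take a y = take a x \<and> take b z = take b y then f z else 0) / real q ^ (n - b))
            = (\<Sum>y\<in>?W. f z / real q ^ (n - b) * (if take b y = take b z then 1 else 0))"
          apply (rule sum.cong, simp)
          using True \<open>a \<le> b\<close> by (auto dest: take_le_eq)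
        also have "\<dots> = f z / real q ^ (n - b) * (\<Sum>y\<in>?W. (if take b y = take b z then 1 else 0))"
          by (rule sum_distrib_left[symmetric])
        also have "\<dots> = f z / real q ^ (n - b) * real q ^ (n - b)"
          by (simp only: count_take_sum[OF zW assms(2)])
        finally show ?thesis using True qp[of "n-b"] assms(3) by simp
      next
        case False
        have "take a y = take a x \<Longrightarrow> take b z \<noteq> take b y" for y
          using False \<open>a \<le> b\<close> by (metis take_le_eq)
        hence "\<forall>y\<in>?W. (if take a y = take a x \<and> take b z = take b y then f z else 0) / real q ^ (n - b) = 0"
          by auto
        thus ?thesis using False by (simp only: sum.neutral) simp
      qed
    qed simp
    finally have "avg q n a (avg q n b f) x = (\<Sum>z\<in>?W. if take a z = take a x then f z else 0) / real q ^ (n - a)" .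
    thus ?thesis using True xW unfolding avg_def[of q n "min a b"] by simp
  next
    case False
    have "avg q n a (avg q n b f) x = (\<Sum>y\<in>?W. if take a y = take a x then avg q n b f y else 0) / real q ^ (n - a)"
      unfolding avg_def[of q n a "avg q n b f" x] using xW by simp
    also have "\<dots> = (\<Sum>y\<in>?W. avg q n b f x * (if take a y = take a x then 1 else 0)) / real q ^ (n - a)"
      apply (rule arg_cong[where f="\<lambda>t. t / _"])
      apply (rule sum.cong, simp)
      subgoal for y
        using False take_le_eq[of a y x b] xW unfolding avg_def by auto
      done
    also have "\<dots> = avg q n b f x"
      using qp[of "n-a"] assms(3) by (simp only: sum_distrib_left[symmetric] count_take_sum[OF xW assms(1)]) simp
    finally show ?thesis using False by simp
  qed
qed

lemma avg_top:
  assumes "x \<in> words q n"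
  shows "avg q n n f x = f x"
proof -
  have "(\<Sum>y\<in>words q n. if take n y = take n x then f y else 0) = (\<Sum>y\<in>words q n. if y = x then f y else 0)"
    by (rule sum.cong) (use assms in \<open>auto simp: words_def\<close>)
  thus ?thesis using assms by (simp add: avg_def)
qed

lemma avg_diff: "avg q n j (\<lambda>x. f x - g x) x = avg q n j f x - avg q n j g x"
  by (simp add: avg_def sum_subtractf[symmetric] diff_divide_distrib if_distrib[where f="\<lambda>t. t - _"] cong: if_cong)
    (simp add: diff_divide_distrib[symmetric] of_bool_def if_distrib sum_subtractf[symmetric] cong: if_cong)



lemma dist_le:
  assumes "i \<le> m"
  shows "insect_dist m x y \<le> i \<longleftrightarrow> take (m-i) x = take (m-i) y"
proof -
  let ?S = "{l. l \<le> m \<and> take l x = take l y}"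
  have fin: "finite ?S" by (rule finite_subset[of _ "{..m}"]) auto
  have ne: "0 \<in> ?S" by simp
  have M: "Max ?S \<in> ?S" using fin ne by (intro Max_in) auto
  show ?thesis
  proof
    assume "insect_dist m x y \<le> i"
    hence "m - i \<le> Max ?S" using M by (simp add: insect_dist_def)
    thus "take (m-i) x = take (m-i) y" using M take_le_eq by blast
  next
    assume "take (m-i) x = take (m-i) y"
    hence "m - i \<in> ?S" by simp
    hence "m - i \<le> Max ?S" using fin by (intro Max_ge)
    thus "insect_dist m x y \<le> i" by (simp add: insect_dist_def)
  qed
qed

lemma dist_le_m: "insect_dist m x y \<le> m"
  by (simp add: insect_dist_def)

lemma p_expand:
  assumes "m \<ge> 1"
  shows "insect_p q m x y = (\<Sum>i\<in>{1..m}. if take (m-i) x = take (m-i) y then insect_term q m i else 0)"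
proof -
  let ?d = "insect_dist m x y"
  have "(\<Sum>i\<in>{1..m}. if take (m-i) x = take (m-i) y then insect_term q m i else 0)
      = (\<Sum>i\<in>{1..m}. if ?d \<le> i then insect_term q m i else 0)"
    by (rule sum.cong) (auto simp: dist_le)
  also have "\<dots> = insect_p q m x y"
  proof (cases "?d \<in> {0,1}")
    case True
    have "(\<Sum>i\<in>{1..m}. if ?d \<le> i then insect_term q m i else 0) = (\<Sum>i\<in>{1..m}. insect_term q m i)"
      by (rule sum.cong) (use True in auto)
    also have "\<dots> = insect_term q m 1 + (\<Sum>i\<in>{2..m}. insect_term q m i)"
      using assms by (simp add: sum.atLeast_Suc_atMost numeral_2_eq_2)
    also have "insect_term q m 1 = (1 / real q) * (1 - insect_alpha q m 1)"
      by (simp add: insect_term_def)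
    finally show ?thesis using True by (simp add: insect_p_def)
  next
    case False
    hence d2: "?d \<ge> 2" by auto
    have "(\<Sum>i\<in>{1..m}. if ?d \<le> i then insect_term q m i else 0) = (\<Sum>i\<in>{i\<in>{1..m}. ?d \<le> i}. insect_term q m i)"
      by (rule sum.inter_filter[symmetric]) simp
    also have "{i\<in>{1..m}. ?d \<le> i} = {?d..m}" using d2 by auto
    finally show ?thesis using False by (simp add: insect_p_def)
  qed
  finally show ?thesis ..
qed

definition Top :: "nat \<Rightarrow> nat \<Rightarrow> (nat list \<Rightarrow> real) \<Rightarrow> nat list \<Rightarrow> real" where
  "Top q n f x = (if x \<in> words q n then (\<Sum>y\<in>words q n. insect_p q n x y * f y) else 0)"

definition cc :: "nat \<Rightarrow> nat \<Rightarrow> nat \<Rightarrow> real" where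
  "cc q n i = insect_term q n i * real q ^ i"

lemma sum_take_avg:
  assumes "x \<in> words q n" "j \<le> n" "q \<ge> 1"
  shows "(\<Sum>y\<in>words q n. if take j y = take j x then f y else 0) = real q ^ (n-j) * avg q n j f x"
  using assms by (simp add: avg_def)

lemma Top_expand:
  assumes "n \<ge> 1" "q \<ge> 1"
  shows "Top q n f x = (\<Sum>i\<in>{1..n}. cc q n i * avg q n (n-i) f x)"
proof (cases "x \<in> words q n")
  case False thus ?thesis by (simp add: Top_def avg_def)
next
  case xW: True
  let ?W = "words q n"
  have "Top q n f x = (\<Sum>y\<in>?W. \<Sum>i\<in>{1..n}. if take (n-i) y = take (n-i) x then insect_term q n i * f y else 0)"
    using xW by (simp add: Top_def p_expand[OF assms(1)] sum_distrib_right eq_commute[of "take _ x"] if_distrib[where f="\<lambda>t. t * f _"] cong: if_cong)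
  also have "\<dots> = (\<Sum>i\<in>{1..n}. \<Sum>y\<in>?W. if take (n-i) y = take (n-i) x then insect_term q n i * f y else 0)"
    by (rule sum.swap)
  also have "\<dots> = (\<Sum>i\<in>{1..n}. cc q n i * avg q n (n-i) f x)"
  proof (rule sum.cong)
    fix i assume i: "i \<in> {1..n}"
    have "(\<Sum>y\<in>?W. if take (n-i) y = take (n-i) x then insect_term q n i * f y else 0)
        = insect_term q n i * (\<Sum>y\<in>?W. if take (n-i) y = take (n-i) x then f y else 0)"
      by (simp add: sum_distrib_left if_distrib[where f="\<lambda>t. insect_term q n i * t"] cong: if_cong)
    also have "\<dots> = insect_term q n i * (real q ^ (n - (n-i)) * avg q n (n-i) f x)"
      using sum_take_avg[OF xW _ assms(2), of "n-i" f] by simp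
    also have "n - (n - i) = i" using i by auto
    finally show "(\<Sum>y\<in>?W. if take (n-i) y = take (n-i) x then insect_term q n i * f y else 0) = cc q n i * avg q n (n-i) f x"
      by (simp add: cc_def)
  qed simp
  finally show ?thesis .
qed

lemma alpha_bounds:
  assumes "q \<ge> 2" "1 \<le> l" "l < m"
  shows "0 < insect_alpha q m l" "insect_alpha q m l < 1"
proof -
  have a: "real q ^ l \<ge> 2" using assms
    by (metis one_le_power le_add_diff_inverse2 numeral_le_real_of_nat_iff order_trans power_increasing power_one_right less_imp_le_nat of_nat_numeral one_le_numeral)
  have b: "real q ^ (l+1) > real q ^ l" using assms by (intro power_strict_increasing) auto
  have b': "real q ^ (l+1) - 1 > 0" using a b by linarith
  show "0 < insect_alpha q m l" using assms a b'
    by (simp add: insect_alpha_def del: power_Suc)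
  show "insect_alpha q m l < 1" using assms a b b'
    by (simp add: insect_alpha_def divide_less_eq del: power_Suc)
qed

lemma term_pos:
  assumes "q \<ge> 2" "1 \<le> i" "i \<le> m"
  shows "insect_term q m i > 0"
proof -
  have "(\<Prod>l\<in>{1..<i}. insect_alpha q m l) > 0"
    by (rule prod_pos) (use assms alpha_bounds in auto)
  moreover have "1 - insect_alpha q m i > 0"
  proof (cases "i = m")
    case True thus ?thesis by (simp add: insect_alpha_def)
  next
    case False thus ?thesis using alpha_bounds(2)[OF assms(1,2)] assms by simp
  qed
  ultimately show ?thesis using assms unfolding insect_term_def by simp
qed

lemma cc_pos: "q \<ge> 2 \<Longrightarrow> 1 \<le> i \<Longrightarrow> i \<le> n \<Longrightarrow> cc q n i > 0"
  unfolding cc_def by (simp add: term_pos)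



definition FF :: "nat \<Rightarrow> nat \<Rightarrow> nat \<Rightarrow> (nat list \<Rightarrow> real) \<Rightarrow> nat list \<Rightarrow> real" where
  "FF q n k f = (if k = 0 then avg q n 0 f else (\<lambda>x. avg q n k f x - avg q n (k-1) f x))"

definition lam :: "nat \<Rightarrow> nat \<Rightarrow> nat \<Rightarrow> real" where
  "lam q n k = (\<Sum>i\<in>{1..n-k}. cc q n i)"

lemma avg_FF:
  assumes "j \<le> n" "k \<le> n" "q \<ge> 1"
  shows "avg q n j (FF q n k f) x = (if k \<le> j then FF q n k f x else 0)"
proof (cases "k = 0")
  case True thus ?thesis using assms by (simp add: FF_def avg_avg)
next
  case False
  have "avg q n j (FF q n k f) x = avg q n (min j k) f x - avg q n (min j (k-1)) f x"
    using False assms by (simp add: FF_def avg_diff avg_avg)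
  moreover have "min j k = k \<and> min j (k-1) = k-1 \<or> (min j k = j \<and> min j (k-1) = j \<and> \<not> k \<le> j)"
    using False by auto
  ultimately show ?thesis using False by (auto simp: FF_def)
qed

lemma Top_FF:
  assumes "n \<ge> 1" "q \<ge> 1" "k \<le> n"
  shows "Top q n (FF q n k f) = (\<lambda>x. lam q n k * FF q n k f x)"
proof
  fix x
  have "Top q n (FF q n k f) x = (\<Sum>i\<in>{1..n}. cc q n i * (if k \<le> n - i then FF q n k f x else 0))"
    using assms by (simp add: Top_expand avg_FF)
  also have "\<dots> = (\<Sum>i\<in>{1..n}. if k \<le> n - i then cc q n i * FF q n k f x else 0)"
    by (rule sum.cong) auto
  also have "\<dots> = (\<Sum>i\<in>{i\<in>{1..n}. k \<le> n - i}. cc q n i * FF q n k f x)"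
    by (rule sum.inter_filter[symmetric]) simp
  also have "{i\<in>{1..n}. k \<le> n - i} = {1..n-k}" by auto
  finally show "Top q n (FF q n k f) x = lam q n k * FF q n k f x"
    by (simp add: lam_def sum_distrib_right)
qed

lemma FF_tele: "(\<Sum>k\<in>{0..j}. FF q n k f x) = avg q n j f x"
  by (induction j) (simp_all add: FF_def)

lemma lam_strict:
  assumes "q \<ge> 2" "k < k'" "k' \<le> n"
  shows "lam q n k' < lam q n k"
proof -
  have sub: "{1..n-k'} \<subseteq> {1..n-k}" using assms by auto
  have "lam q n k = lam q n k' + (\<Sum>i\<in>{1..n-k} - {1..n-k'}. cc q n i)"
    unfolding lam_def using sum.subset_diff[OF sub, of "cc q n"] by simp
  moreover have "(\<Sum>i\<in>{1..n-k} - {1..n-k'}. cc q n i) > 0"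
  proof (rule sum_pos)
    show "{1..n-k} - {1..n-k'} \<noteq> {}" using assms by (auto intro: exI[of _ "n-k"])
  qed (use assms cc_pos in auto)
  ultimately show ?thesis by simp
qed

lemma lam_inj: "q \<ge> 2 \<Longrightarrow> inj_on (lam q n) {0..n}"
  unfolding inj_on_def
  by (metis atLeastAtMost_iff lam_strict less_irrefl linorder_neqE_nat)

lemma eig_sep:
  fixes T :: "('a \<Rightarrow> real) \<Rightarrow> ('a \<Rightarrow> real)" and V :: "('a\<Rightarrow>real) set"
  assumes add: "\<And>f g. f\<in>V \<Longrightarrow> g\<in>V \<Longrightarrow> (\<lambda>x. f x + g x) \<in> V"
   and scl: "\<And>f c. f \<in> V \<Longrightarrow> (\<lambda>x. c * f x) \<in> V"
   and TV: "\<And>f. f\<in>V \<Longrightarrow> T f \<in> V"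
   and Tadd: "\<And>f g. T (\<lambda>x. f x + g x) = (\<lambda>x. T f x + T g x)"
   and Tscl: "\<And>f c. T (\<lambda>x. c * f x) = (\<lambda>x. c * T f x)"
  shows "finite S \<Longrightarrow> (\<And>k. k\<in>S \<Longrightarrow> T (g k) = (\<lambda>x. lm k * g k x)) \<Longrightarrow> inj_on lm S
     \<Longrightarrow> (\<lambda>x. \<Sum>k\<in>S. g k x) \<in> V \<Longrightarrow> \<forall>k\<in>S. g k \<in> V"
proof (induction S arbitrary: g rule: finite_induct)
  case empty thus ?case by simp
next
  case (insert k0 S)
  have T0: "T (\<lambda>x. 0) = (\<lambda>x. 0)" using Tscl[of 0 "\<lambda>x. 0"] by simp
  have Tsum: "T (\<lambda>x. \<Sum>k\<in>A. u k x) = (\<lambda>x. \<Sum>k\<in>A. T (u k) x)" if "finite A" for A and u :: "_ \<Rightarrow> 'a \<Rightarrow> real"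
    using that by (induction A rule: finite_induct) (simp_all add: T0 Tadd)
  have Vsum: "(\<lambda>x. \<Sum>k\<in>A. u k x) \<in> V" if "finite A" "\<forall>k\<in>A. u k \<in> V" "(\<lambda>x. 0) \<in> V" for A and u :: "_ \<Rightarrow> 'a \<Rightarrow> real"
    using that by (induction A rule: finite_induct) (simp_all add: add)
  let ?f = "\<lambda>x. \<Sum>k\<in>insert k0 S. g k x"
  have fV: "?f \<in> V" by fact
  have zV: "(\<lambda>x. 0) \<in> V" using scl[OF fV, of 0] by simp
  have "T ?f = (\<lambda>x. \<Sum>k\<in>insert k0 S. lm k * g k x)"
    using Tsum[OF insert.hyps(1)[THEN finite_insert[THEN iffD2]], of g] insert.prems(1) by simp
  have "(\<lambda>x. T ?f x + (- lm k0) * ?f x) \<in> V" using add[OF TV[OF fV] scl[OF fV]] by blast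
  also have "(\<lambda>x. T ?f x + (- lm k0) * ?f x) = (\<lambda>x. \<Sum>k\<in>S. (lm k - lm k0) * g k x)"
  proof
    fix x
    have "T ?f x = (\<Sum>k\<in>insert k0 S. lm k * g k x)"
      using Tsum[of "insert k0 S" g] insert.hyps insert.prems(1) by simp
    hence "T ?f x + (- lm k0) * ?f x = (\<Sum>k\<in>insert k0 S. lm k * g k x) - (\<Sum>k\<in>insert k0 S. lm k0 * g k x)"
      by (simp only: sum_distrib_left) (simp add: sum_negf)
    also have "\<dots> = (\<Sum>k\<in>insert k0 S. (lm k - lm k0) * g k x)"
      by (simp only: sum_subtractf[symmetric] left_diff_distrib)
    also have "\<dots> = (\<Sum>k\<in>S. (lm k - lm k0) * g k x)"
      using insert.hyps by simp
    finally show "T ?f x + (- lm k0) * ?f x = (\<Sum>k\<in>S. (lm k - lm k0) * g k x)" .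
  qed
  finally have hV: "(\<lambda>x. \<Sum>k\<in>S. (lm k - lm k0) * g k x) \<in> V" .
  have IH: "\<forall>k\<in>S. (\<lambda>x. (lm k - lm k0) * g k x) \<in> V"
  proof (rule insert.IH[of "\<lambda>k x. (lm k - lm k0) * g k x"])
    fix k assume "k \<in> S"
    thus "T (\<lambda>x. (lm k - lm k0) * g k x) = (\<lambda>x. lm k * ((lm k - lm k0) * g k x))"
      using Tscl[of "lm k - lm k0" "g k"] insert.prems(1)[of k] by (simp add: algebra_simps)
  next
    show "inj_on lm S" using insert.prems(2) by (simp add: inj_on_insert)
  qed (use hV in simp)
  have gS: "\<forall>k\<in>S. g k \<in> V"
  proof
    fix k assume k: "k \<in> S"
    hence ne: "lm k - lm k0 \<noteq> 0" using insert.prems(2) insert.hyps(2) by (auto simp: inj_on_def)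
    have "(\<lambda>x. (1 / (lm k - lm k0)) * ((lm k - lm k0) * g k x)) \<in> V" using scl IH k by blast
    thus "g k \<in> V" using ne by simp
  qed
  have sV: "(\<lambda>x. \<Sum>k\<in>S. g k x) \<in> V" using Vsum[OF insert.hyps(1) gS zV] .
  have "(\<lambda>x. ?f x + (-1) * (\<Sum>k\<in>S. g k x)) \<in> V" using add[OF fV scl[OF sV]] .
  also have "(\<lambda>x. ?f x + (-1) * (\<Sum>k\<in>S. g k x)) = g k0" using insert.hyps by auto
  finally show ?case using gS by simp
qed



lemma avg_take_cong:
  "x \<in> words q n \<Longrightarrow> x' \<in> words q n \<Longrightarrow> take j x = take j x' \<Longrightarrow> avg q n j f x = avg q n j f x'"
  by (simp add: avg_def)

lemma avg_ind_pos:
  assumes "M \<subseteq> words q n" "x \<in> words q n" "q \<ge> 1"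
  shows "avg q n j (\<lambda>y. if y\<in>M then 1 else 0) x > 0 \<longleftrightarrow> (\<exists>y\<in>M. take j y = take j x)"
proof -
  let ?s = "(\<Sum>y\<in>words q n. if take j y = take j x then (if y\<in>M then 1 else 0) else 0::real)"
  have e: "avg q n j (\<lambda>y. if y\<in>M then 1 else 0) x = ?s / real q ^ (n-j)"
    using assms by (simp add: avg_def)
  have qp: "real q ^ (n-j) > 0" using assms by simp
  have "?s > 0 \<longleftrightarrow> (\<exists>y\<in>M. take j y = take j x)"
  proof
    assume pos: "?s > 0"
    show "\<exists>y\<in>M. take j y = take j x"
    proof (rule ccontr)
      assume "\<not> (\<exists>y\<in>M. take j y = take j x)"
      hence "\<forall>y\<in>words q n. (if take j y = take j x then (if y\<in>M then 1 else 0) else 0::real) = 0"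
        by auto
      hence "?s = 0" by (rule sum.neutral)
      thus False using pos by simp
    qed
  next
    assume "\<exists>y\<in>M. take j y = take j x"
    then obtain y where y: "y \<in> M" "take j y = take j x" by blast
    have "(if take j y = take j x then (if y\<in>M then 1 else 0) else 0::real) \<le> ?s"
      by (rule member_le_sum) (use y assms in auto)
    thus "?s > 0" using y by simp
  qed
  thus ?thesis using e qp by (simp add: divide_pos_pos zero_less_divide_iff)
qed

lemma sum_words_Suc:
  "(\<Sum>y\<in>words q (Suc m). F y) = (\<Sum>a\<in>words q m. \<Sum>c\<in>{..<q}. F (a @ [c]))"
proof -
  have bij: "bij_betw (\<lambda>(a,c). a @ [c]) (words q m \<times> {..<q}) (words q (Suc m))"
  proof (rule bij_betw_imageI)
    show "inj_on (\<lambda>(a, c). a @ [c]) (words q m \<times> {..<q})" by (auto simp: inj_on_def)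
    show "(\<lambda>(a, c). a @ [c]) ` (words q m \<times> {..<q}) = words q (Suc m)"
    proof
      show "(\<lambda>(a, c). a @ [c]) ` (words q m \<times> {..<q}) \<subseteq> words q (Suc m)"
        by (auto simp: words_def)
    next
      show "words q (Suc m) \<subseteq> (\<lambda>(a, c). a @ [c]) ` (words q m \<times> {..<q})"
      proof
        fix y assume y: "y \<in> words q (Suc m)"
        hence ne: "y \<noteq> []" by (auto simp: words_def)
        hence "y = butlast y @ [last y]" by simp
        have b: "butlast y \<in> words q m" using y ne by (auto simp: words_def dest: in_set_butlastD)
        have "last y \<in> set y" using ne by (rule last_in_set)
        hence l: "last y < q" using y by (auto simp: words_def)
        show "y \<in> (\<lambda>(a, c). a @ [c]) ` (words q m \<times> {..<q})"
          by (rule image_eqI[where x="(butlast y, last y)"]) (use b l ne in auto)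
      qed
    qed
  qed
  have "(\<Sum>y\<in>words q (Suc m). F y) = (\<Sum>p\<in>words q m \<times> {..<q}. F ((\<lambda>(a,c). a @ [c]) p))"
    using sum.reindex_bij_betw[OF bij, of F] by simp
  also have "\<dots> = (\<Sum>a\<in>words q m. \<Sum>c\<in>{..<q}. F (a @ [c]))"
    by (simp add: sum.cartesian_product case_prod_beta)
  finally show ?thesis .
qed

lemma lift_sum:
  assumes "x \<in> words q (Suc m)" "j \<le> m"
  shows "real q * (\<Sum>y'\<in>words q m. if take j y' = take j (butlast x) then g y' else 0)
       = (\<Sum>y\<in>words q (Suc m). if take j y = take j x then g (butlast y) else 0)"
proof -
  have lx: "length x = Suc m" using assms by (simp add: words_def)
  have tx: "take j (butlast x) = take j x" using lx assms by (simp add: take_butlast)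
  have "(\<Sum>y\<in>words q (Suc m). if take j y = take j x then g (butlast y) else 0)
      = (\<Sum>a\<in>words q m. \<Sum>c\<in>{..<q}. if take j (a@[c]) = take j x then g (butlast (a@[c])) else 0)"
    by (rule sum_words_Suc)
  also have "\<dots> = (\<Sum>a\<in>words q m. real q * (if take j a = take j (butlast x) then g a else 0))"
  proof (rule sum.cong)
    fix a assume "a \<in> words q m"
    hence "length a = m" by (simp add: words_def)
    hence "take j (a@[c]) = take j a" for c using assms by simp
    thus "(\<Sum>c\<in>{..<q}. if take j (a@[c]) = take j x then g (butlast (a@[c])) else 0)
        = real q * (if take j a = take j (butlast x) then g a else 0)" using tx by simp
  qed simp
  finally show ?thesis by (simp add: sum_distrib_left)
qed



lemma p_sum:
  assumes "m \<ge> 1" "M' \<subseteq> words q m"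
  shows "(\<Sum>y\<in>M'. insect_p q m x y) = (\<Sum>i\<in>{1..m}. insect_term q m i *
     (\<Sum>y\<in>words q m. if take (m-i) y = take (m-i) x then (if y\<in>M' then 1 else 0) else 0))"
proof -
  have "(\<Sum>y\<in>M'. insect_p q m x y) = (\<Sum>y\<in>words q m. if y \<in> M' then insect_p q m x y else 0)"
  proof -
    have "(\<Sum>y\<in>words q m. if y \<in> M' then insect_p q m x y else 0) = (\<Sum>y\<in>{y\<in>words q m. y \<in> M'}. insect_p q m x y)"
      by (rule sum.inter_filter[symmetric]) simp
    also have "{y\<in>words q m. y \<in> M'} = M'" using assms by auto
    finally show ?thesis by simp
  qed
  also have "\<dots> = (\<Sum>y\<in>words q m. \<Sum>i\<in>{1..m}. insect_term q m i *
      (if take (m-i) y = take (m-i) x then (if y\<in>M' then 1 else 0) else 0))"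
    by (rule sum.cong) (auto simp: p_expand[OF assms(1)] intro!: sum.cong)
  also have "\<dots> = (\<Sum>i\<in>{1..m}. \<Sum>y\<in>words q m. insect_term q m i *
      (if take (m-i) y = take (m-i) x then (if y\<in>M' then 1 else 0) else 0))"
    by (rule sum.swap)
  also have "\<dots> = (\<Sum>i\<in>{1..m}. insect_term q m i *
     (\<Sum>y\<in>words q m. if take (m-i) y = take (m-i) x then (if y\<in>M' then 1 else 0) else 0))"
    by (simp add: sum_distrib_left)
  finally show ?thesis .
qed

theorem lemma14:
  fixes q n :: nat and P :: "nat list set set"
  assumes "q \<ge> 2" and "n \<ge> 2"
    and "insect_lumpable q n P"
  shows "insect_lumpable q (n - 1) ((\<lambda>L. butlast ` L) ` P)"
proof -
  note q2 = assms(1)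
  obtain m where nm: "n = Suc m" using assms(2) by (cases n) auto
  have m1: "m \<ge> 1" using assms(2) nm by simp
  have q1: "q \<ge> 1" using q2 by simp
  let ?W = "words q n"
  have part: "partition_on ?W P"
    and lp: "\<forall>L\<in>P. \<forall>L'\<in>P. \<forall>x\<in>L. \<forall>x'\<in>L. (\<Sum>y\<in>L'. insect_p q n x y) = (\<Sum>y\<in>L'. insect_p q n x' y)"
    using assms(3) unfolding insect_lumpable_def by blast+
  have UP: "\<Union>P = ?W" and dj: "\<And>A B. A\<in>P \<Longrightarrow> B\<in>P \<Longrightarrow> A \<noteq> B \<Longrightarrow> A \<inter> B = {}" and ne: "{} \<notin> P"
    using part unfolding partition_on_def disjoint_def by blast+
  have sub: "\<And>L. L\<in>P \<Longrightarrow> L \<subseteq> ?W" using UP by blast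
  have finL: "finite L" if "L\<in>P" for L by (rule finite_subset[OF sub[OF that]]) simp
  define V where "V = {f::nat list \<Rightarrow> real. \<forall>L\<in>P. \<forall>x\<in>L. \<forall>y\<in>L. f x = f y}"
  have Vadd: "(\<lambda>x. f x + g x) \<in> V" if hf: "f\<in>V" and hg: "g\<in>V" for f g
    unfolding V_def
  proof (intro CollectI ballI)
    fix L x y assume L: "L\<in>P" and x: "x\<in>L" and y: "y\<in>L"
    have "f x = f y" "g x = g y" using hf hg L x y unfolding V_def by blast+
    thus "f x + g x = f y + g y" by simp
  qed
  have Vscl: "(\<lambda>x. c * f x) \<in> V" if hf: "f\<in>V" for f c
    unfolding V_def
  proof (intro CollectI ballI)
    fix L x y assume L: "L\<in>P" and x: "x\<in>L" and y: "y\<in>L"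
    have "f x = f y" using hf L x y unfolding V_def by blast
    thus "c * f x = c * f y" by simp
  qed
  have Vsum: "(\<lambda>x. \<Sum>k\<in>A. u k x) \<in> V" if h: "\<forall>k\<in>A. u k \<in> V" for A and u :: "nat \<Rightarrow> nat list \<Rightarrow> real"
    unfolding V_def
  proof (intro CollectI ballI)
    fix L x y assume L: "L\<in>P" and x: "x\<in>L" and y: "y\<in>L"
    have "\<forall>k\<in>A. u k x = u k y" using h L x y unfolding V_def by blast
    hence "\<And>k. k\<in>A \<Longrightarrow> u k x = u k y" by blast
    thus "(\<Sum>k\<in>A. u k x) = (\<Sum>k\<in>A. u k y)" by (rule sum.cong[OF refl])
  qed
  have TV: "Top q n f \<in> V" if f: "f \<in> V" for f
  proof -
    have key: "Top q n f x = (\<Sum>M\<in>P. f (SOME z. z\<in>M) * (\<Sum>y\<in>M. insect_p q n x y))" if x: "x \<in> ?W" for x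
    proof -
      have "Top q n f x = (\<Sum>y\<in>?W. insect_p q n x y * f y)" using x by (simp add: Top_def)
      also have "?W = \<Union>P" using UP by (rule sym)
      also have "(\<Sum>y\<in>\<Union>P. insect_p q n x y * f y) = (sum \<circ> sum) (\<lambda>y. insect_p q n x y * f y) P"
        by (rule sum.Union_disjoint) (use finL dj in blast)+
      also have "\<dots> = (\<Sum>M\<in>P. \<Sum>y\<in>M. insect_p q n x y * f y)" by (simp only: comp_def)
      also have "\<dots> = (\<Sum>M\<in>P. f (SOME z. z\<in>M) * (\<Sum>y\<in>M. insect_p q n x y))"
      proof (rule sum.cong[OF refl])
        fix M assume M: "M\<in>P"
        have "M \<noteq> {}" using ne M by blast
        hence s: "(SOME z. z\<in>M) \<in> M" by (simp add: some_in_eq)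
        have fy: "\<forall>y\<in>M. f y = f (SOME z. z\<in>M)" using f M s unfolding V_def by blast
        have "(\<Sum>y\<in>M. insect_p q n x y * f y) = (\<Sum>y\<in>M. f (SOME z. z\<in>M) * insect_p q n x y)"
          by (rule sum.cong[OF refl]) (use fy in simp)
        thus "(\<Sum>y\<in>M. insect_p q n x y * f y) = f (SOME z. z\<in>M) * (\<Sum>y\<in>M. insect_p q n x y)"
          by (simp only: sum_distrib_left)
      qed
      finally show ?thesis .
    qed
    show ?thesis unfolding V_def
    proof (intro CollectI ballI)
      fix L x y assume L: "L\<in>P" and x: "x\<in>L" and y: "y\<in>L"
      have xW: "x\<in>?W" and yW: "y\<in>?W" using sub[OF L] x y by blast+
      have "\<forall>M\<in>P. (\<Sum>z\<in>M. insect_p q n x z) = (\<Sum>z\<in>M. insect_p q n y z)" using lp L x y by blast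
      thus "Top q n f x = Top q n f y"
        unfolding key[OF xW] key[OF yW] by (intro sum.cong[OF refl]) simp
    qed
  qed
  have Tadd: "\<And>f g. Top q n (\<lambda>x. f x + g x) = (\<lambda>x. Top q n f x + Top q n g x)"
    by (rule ext) (simp add: Top_def distrib_left sum.distrib)
  have Tscl: "\<And>f c. Top q n (\<lambda>x. c * f x) = (\<lambda>x. c * Top q n f x)"
    by (rule ext) (simp add: Top_def sum_distrib_left mult.left_commute)
  have avgV: "avg q n j f \<in> V" if f: "f\<in>V" and j: "j \<le> n" for f j
  proof -
    have all: "\<forall>k\<in>{0..n}. FF q n k f \<in> V"
    proof (rule eig_sep[of V "Top q n", where lm="lam q n"])
      show "finite {0..n}" by simp
      show "Top q n (FF q n k f) = (\<lambda>x. lam q n k * FF q n k f x)" if "k \<in> {0..n}" for k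
        using Top_FF[of n q k f] that q1 nm by simp
      show "inj_on (lam q n) {0..n}" using lam_inj[OF q2] .
      have "(\<lambda>x. \<Sum>k\<in>{0..n}. FF q n k f x) = avg q n n f" by (simp add: FF_tele)
      moreover have "avg q n n f \<in> V" unfolding V_def
      proof (intro CollectI ballI)
        fix L x y assume L: "L\<in>P" and x: "x\<in>L" and y: "y\<in>L"
        have "x \<in> ?W" "y \<in> ?W" using sub[OF L] x y by blast+
        hence "avg q n n f x = f x" "avg q n n f y = f y" by (simp_all add: avg_top)
        moreover have "f x = f y" using f L x y unfolding V_def by blast
        ultimately show "avg q n n f x = avg q n n f y" by simp
      qed
      ultimately show "(\<lambda>x. \<Sum>k\<in>{0..n}. FF q n k f x) \<in> V" by simp
      show "\<And>f g. f\<in>V \<Longrightarrow> g\<in>V \<Longrightarrow> (\<lambda>x. f x + g x) \<in> V" by (rule Vadd)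
      show "\<And>f c. f\<in>V \<Longrightarrow> (\<lambda>x. c * f x) \<in> V" by (rule Vscl)
      show "\<And>f. f\<in>V \<Longrightarrow> Top q n f \<in> V" by (rule TV)
      show "\<And>f g. Top q n (\<lambda>x. f x + g x) = (\<lambda>x. Top q n f x + Top q n g x)" by (rule Tadd)
      show "\<And>f c. Top q n (\<lambda>x. c * f x) = (\<lambda>x. c * Top q n f x)" by (rule Tscl)
    qed
    have "avg q n j f = (\<lambda>x. \<Sum>k\<in>{0..j}. FF q n k f x)" by (simp add: FF_tele)
    moreover have "(\<lambda>x. \<Sum>k\<in>{0..j}. FF q n k f x) \<in> V"
      by (rule Vsum) (use all j in simp)
    ultimately show ?thesis by simp
  qed
  define ind where "ind M = (\<lambda>y::nat list. if y\<in>M then 1 else 0 :: real)" for M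
  have indV: "ind M \<in> V" if M: "M \<in> P" for M
    unfolding V_def ind_def
  proof (intro CollectI ballI)
    fix L x y assume L: "L\<in>P" and x: "x\<in>L" and y: "y\<in>L"
    show "(if x \<in> M then 1 else 0::real) = (if y \<in> M then 1 else 0)"
    proof (cases "L = M")
      case True thus ?thesis using x y by simp
    next
      case False thus ?thesis using dj[OF L M] x y by auto
    qed
  qed
  have bt: "butlast y = butlast x \<longleftrightarrow> take m y = take m x" if "x\<in>?W" "y\<in>?W" for x y
    using that nm by (simp add: words_def butlast_conv_take)
  have hpos: "avg q n m (ind M) x > 0 \<longleftrightarrow> (\<exists>y\<in>M. butlast y = butlast x)" if M: "M\<in>P" and x: "x\<in>?W" for M x
    using avg_ind_pos[OF sub[OF M] x q1, of m] sub[OF M] bt[OF x] unfolding ind_def by auto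
  have hV: "avg q n m (ind M) \<in> V" if "M\<in>P" for M using avgV[OF indV[OF that]] nm by simp
  have cover: "butlast ` L1 \<subseteq> butlast ` L2"
    if L1: "L1\<in>P" and L2: "L2\<in>P" and a: "a\<in>L1" and b: "b\<in>L2" and ab: "butlast a = butlast b" for L1 L2 a b
  proof
    fix w assume "w \<in> butlast ` L1"
    then obtain c where c: "c\<in>L1" "w = butlast c" by auto
    have aW: "a\<in>?W" and bW: "b\<in>?W" and cW: "c\<in>?W" using sub L1 L2 a b c by auto
    have "avg q n m (ind L2) b > 0" using hpos[OF L2 bW] b by auto
    moreover have "avg q n m (ind L2) a = avg q n m (ind L2) b"
      by (rule avg_take_cong[OF aW bW]) (use bt[OF bW aW] ab in simp)
    moreover have "avg q n m (ind L2) c = avg q n m (ind L2) a"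
      using hV[OF L2] L1 a c unfolding V_def by blast
    ultimately have "avg q n m (ind L2) c > 0" by simp
    then obtain y where "y\<in>L2" "butlast y = butlast c" using hpos[OF L2 cW] by auto
    thus "w \<in> butlast ` L2" using c by (metis image_eqI)
  qed
  let ?P' = "(\<lambda>L. butlast ` L) ` P"
  have n1: "n - 1 = m" using nm by simp
  have "partition_on (words q m) ?P'"
    unfolding partition_on_def disjoint_def
  proof (intro conjI ballI impI)
    have "\<Union>?P' = butlast ` ?W" using UP by auto
    also have "butlast ` ?W = words q m"
    proof
      show "butlast ` ?W \<subseteq> words q m" using nm by (auto simp: words_def dest: in_set_butlastD)
    next
      show "words q m \<subseteq> butlast ` ?W"
      proof
        fix w assume w: "w \<in> words q m"
        hence "w @ [0] \<in> ?W" using nm q1 by (auto simp: words_def)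
        thus "w \<in> butlast ` ?W" by (metis butlast_snoc image_eqI)
      qed
    qed
    finally show "\<Union>?P' = words q m" .
  next
    show "{} \<notin> ?P'"
    proof
      assume "{} \<in> ?P'"
      then obtain L where "L \<in> P" "butlast ` L = {}" by blast
      thus False using ne by simp
    qed
  next
    fix A B assume A: "A \<in> ?P'" and B: "B \<in> ?P'" and AB: "A \<noteq> B"
    show "A \<inter> B = {}"
    proof (rule ccontr)
      assume "A \<inter> B \<noteq> {}"
      then obtain w where wA: "w \<in> A" and wB: "w \<in> B" by blast
      obtain L1 where L1: "L1\<in>P" and AL: "A = butlast ` L1" using A by blast
      obtain L2 where L2: "L2\<in>P" and BL: "B = butlast ` L2" using B by blast
      obtain a where a: "a\<in>L1" and wa: "w = butlast a" using wA AL by blast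
      obtain b where b: "b\<in>L2" and wb: "w = butlast b" using wB BL by blast
      have ab: "butlast a = butlast b" using wa wb by simp
      have "A = B" unfolding AL BL
        using cover[OF L1 L2 a b ab] cover[OF L2 L1 b a ab[symmetric]] by auto
      thus False using AB by simp
    qed
  qed
  moreover have "\<forall>L'\<in>?P'. \<forall>M'\<in>?P'. \<forall>x\<in>L'. \<forall>x'\<in>L'.
        (\<Sum>y\<in>M'. insect_p q m x y) = (\<Sum>y\<in>M'. insect_p q m x' y)"
  proof (intro ballI)
    fix L' M' x' x'' assume L': "L' \<in> ?P'" and M': "M' \<in> ?P'" and x': "x' \<in> L'" and x'': "x'' \<in> L'"
    obtain L where L: "L\<in>P" "L' = butlast ` L" using L' by auto
    obtain M where M: "M\<in>P" "M' = butlast ` M" using M' by auto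
    obtain x1 where x1: "x1\<in>L" "x' = butlast x1" using x' L by auto
    obtain x2 where x2: "x2\<in>L" "x'' = butlast x2" using x'' L by auto
    have x1W: "x1 \<in> ?W" and x2W: "x2 \<in> ?W" using sub L x1 x2 by auto
    have M'W: "M' \<subseteq> words q m" using M sub[OF M(1)] nm by (force simp: words_def subset_iff dest: in_set_butlastD)
    define H where "H = (\<lambda>y::nat list. if butlast y \<in> M' then 1 else 0::real)"
    have HV: "H \<in> V" unfolding V_def
    proof (intro CollectI ballI)
      fix L0 y y' assume L0: "L0\<in>P" and y: "y\<in>L0" and y': "y'\<in>L0"
      have yW: "y\<in>?W" and y'W: "y'\<in>?W" using sub L0 y y' by auto
      have e: "H z = (if avg q n m (ind M) z > 0 then 1 else 0)" if "z \<in> ?W" for z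
      proof -
        have "butlast z \<in> M' \<longleftrightarrow> avg q n m (ind M) z > 0" using hpos[OF M(1) that] unfolding M(2) image_iff by (metis (no_types))
        thus ?thesis unfolding H_def by simp
      qed
      have "avg q n m (ind M) y = avg q n m (ind M) y'" using hV[OF M(1)] L0 y y' unfolding V_def by blast
      thus "H y = H y'" using e[OF yW] e[OF y'W] by simp
    qed
    have G: "(\<Sum>y\<in>words q m. if take j y = take j x' then (if y\<in>M' then 1 else 0) else 0::real)
           = (\<Sum>y\<in>words q m. if take j y = take j x'' then (if y\<in>M' then 1 else 0) else 0)"
      if j: "j \<le> m" for j
    proof -
      have e: "real q * (\<Sum>y\<in>words q m. if take j y = take j (butlast x) then (if y\<in>M' then 1 else 0) else 0)
          = real q ^ (n-j) * avg q n j H x" if xW: "x \<in> ?W" for x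
      proof -
        have "real q * (\<Sum>y\<in>words q m. if take j y = take j (butlast x) then (if y\<in>M' then 1 else 0) else 0)
            = (\<Sum>y\<in>words q (Suc m). if take j y = take j x then (if butlast y\<in>M' then 1 else 0) else 0)"
          by (rule lift_sum) (use xW nm j in auto)
        also have "\<dots> = real q ^ (n-j) * avg q n j H x"
          using sum_take_avg[OF xW _ q1, of j H] j nm unfolding H_def by simp
        finally show ?thesis .
      qed
      have jn: "j \<le> n" using j nm by simp
      have "avg q n j H \<in> V" by (rule avgV[OF HV jn])
      hence "avg q n j H x1 = avg q n j H x2" using L(1) x1(1) x2(1) unfolding V_def by blast
      hence "real q * (\<Sum>y\<in>words q m. if take j y = take j x' then (if y\<in>M' then 1 else 0) else 0)
           = real q * (\<Sum>y\<in>words q m. if take j y = take j x'' then (if y\<in>M' then 1 else 0) else 0)"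
        using e[OF x1W] e[OF x2W] x1 x2 by simp
      thus ?thesis using q1 by simp
    qed
    show "(\<Sum>y\<in>M'. insect_p q m x' y) = (\<Sum>y\<in>M'. insect_p q m x'' y)"
      unfolding p_sum[OF m1 M'W]
      by (rule sum.cong[OF refl]) (simp add: G)
  qed
  ultimately show ?thesis unfolding insect_lumpable_def n1 by blast
qed


end
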